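(* For any integer $n\ge3$, with $P_n$ and $C_n$ the path and cycle of order $n$, $\gamma_{(2,2,0)}(P_n)=\gamma_{(2,2,0)}(C_n)=2\lceil n/3\rceil$.
   Context: $N(v)$ is the open neighbourhood. $\gamma_{(2,2,0)}(G)$ is the minimum of $\sum_v f(v)$ over functions $f:V(G)\to\{0,1,2\}$ such that $\sum_{u\in N(v)}f(u)\ge2$ for every $v$ with $f(v)\in\{0,1\}$. *)

theory Defs
  imports Complex_Main
begin

text \<open>A simple graph is given by a vertex set V and a symmetric irreflexive adjacency E.\<close>

definition open_nbhd :: "'a set \<Rightarrow> ('a \<Rightarrow> 'a \<Rightarrow> bool) \<Rightarrow> 'a \<Rightarrow> 'a set" where
  "open_nbhd V E v = {u \<in> V. E v u}"

definition is_220_function :: "'a set \<Rightarrow> ('a \<Rightarrow> 'a \<Rightarrow> bool) \<Rightarrow> ('a \<Rightarrow> nat) \<Rightarrow> bool" where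
  "is_220_function V E f \<longleftrightarrow>
     (\<forall>v\<in>V. f v \<in> {0, 1, 2}) \<and>
     (\<forall>v\<in>V. f v \<in> {0, 1} \<longrightarrow> (\<Sum>u\<in>open_nbhd V E v. f u) \<ge> 2)"

definition gamma_220 :: "'a set \<Rightarrow> ('a \<Rightarrow> 'a \<Rightarrow> bool) \<Rightarrow> nat" where
  "gamma_220 V E = Min {(\<Sum>v\<in>V. f v) | f. is_220_function V E f}"

text \<open>Path P_n and cycle C_n on vertex set {0..<n}.\<close>

definition path_adj :: "nat \<Rightarrow> nat \<Rightarrow> bool" where
  "path_adj i j \<longleftrightarrow> i + 1 = j \<or> j + 1 = i"

definition cycle_adj :: "nat \<Rightarrow> nat \<Rightarrow> nat \<Rightarrow> bool" where
  "cycle_adj n i j \<longleftrightarrow> (i + 1) mod n = j \<or> (j + 1) mod n = i"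

end

theory Submission
  imports Defs
begin

lemma ceil_eq: "\<lceil>real n / 3\<rceil> = int ((n + 2) div 3)"
proof (rule ceiling_unique)
  obtain q r where qr: "n = 3*q + r" "r < 3" by (metis div_mult_mod_eq mod_less_divisor zero_less_numeral mult.commute)
  have "r = 0 \<or> r = 1 \<or> r = 2" using qr by auto
  then show "real_of_int (int ((n + 2) div 3)) - 1 < real n / 3"
   and "real n / 3 \<le> real_of_int (int ((n + 2) div 3))"
    using qr by auto
qed

definition sc :: "nat \<Rightarrow> nat \<Rightarrow> nat" where "sc n v = (if v + 1 = n then 0 else v + 1)"
definition pc :: "nat \<Rightarrow> nat \<Rightarrow> nat" where "pc n v = (if v = 0 then n - 1 else v - 1)"

lemma sc_mod: "u < n \<Longrightarrow> (u + 1) mod n = sc n u"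
  by (auto simp: sc_def)

lemma cyc_nbhd:
  assumes "n \<ge> 3" "v < n"
  shows "open_nbhd {0..<n} (cycle_adj n) v = {sc n v, pc n v}"
proof -
  have "u \<in> {0..<n} \<and> ((v + 1) mod n = u \<or> (u + 1) mod n = v) \<longleftrightarrow> u = sc n v \<or> u = pc n v" for u
  proof -
    have e: "u < n \<Longrightarrow> sc n u = v \<longleftrightarrow> u = pc n v" using assms by (auto simp: sc_def pc_def)
    have "sc n v < n" "pc n v < n" using assms by (auto simp: sc_def pc_def)
    then show ?thesis using e sc_mod[OF assms(2)] sc_mod[of u n] by auto
  qed
  then show ?thesis unfolding open_nbhd_def cycle_adj_def by auto
qed

lemma sc_pc:
  assumes "n \<ge> 3" "v < n"
  shows "sc n v < n" "pc n v < n" "pc n (sc n v) = v" "sc n (pc n v) = v"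
    "sc n v \<noteq> pc n v" "sc n v \<noteq> v" "pc n v \<noteq> v" "sc n (sc n v) \<noteq> v"
  using assms by (auto simp: sc_def pc_def)

lemma sum_sc: assumes "n \<ge> 3" shows "(\<Sum>v\<in>{0..<n}. f (sc n v)) = (\<Sum>v\<in>{0..<n}. (f v::nat))"
  by (rule sum.reindex_bij_witness[where i="pc n" and j="sc n"]) (use assms sc_pc in auto)

lemma sum_pc: assumes "n \<ge> 3" shows "(\<Sum>v\<in>{0..<n}. f (pc n v)) = (\<Sum>v\<in>{0..<n}. (f v::nat))"
  by (rule sum.reindex_bij_witness[where i="sc n" and j="pc n"]) (use assms sc_pc in auto)

lemma lower_cycle:
  assumes n: "n \<ge> 3" and f: "is_220_function {0..<n} (cycle_adj n) f"
  shows "2 * ((n + 2) div 3) \<le> (\<Sum>v\<in>{0..<n}. f v)"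
proof -
  define W where "W = (\<Sum>v\<in>{0..<n}. f v)"
  define c where "c v = f v + f (sc n v) + f (pc n v)" for v
  have vals: "f v \<in> {0,1,2}" if "v < n" for v using f that unfolding is_220_function_def by auto
  have nb: "f v \<in> {0,1} \<Longrightarrow> f (sc n v) + f (pc n v) \<ge> 2" if "v < n" for v
  proof -
    assume "f v \<in> {0,1}"
    then have "(\<Sum>u\<in>open_nbhd {0..<n} (cycle_adj n) v. f u) \<ge> 2"
      using f that unfolding is_220_function_def by auto
    then show ?thesis using cyc_nbhd[OF n that] sc_pc(5)[OF n that] by simp
  qed
  have c2: "c v \<ge> 2" if "v < n" for v using vals[OF that] nb[OF that] unfolding c_def by fastforce
  have c3: "f v = 1 \<Longrightarrow> c v \<ge> 3" if "v < n" for v using nb[OF that] unfolding c_def by fastforce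
  have sumc: "(\<Sum>v\<in>{0..<n}. c v) = 3 * W"
    unfolding c_def W_def sum.distrib sum_sc[OF n] sum_pc[OF n] by simp
  define d where "d v = c v - 2" for v
  have cd: "(\<Sum>v\<in>{0..<n}. c v) = 2 * n + (\<Sum>v\<in>{0..<n}. d v)"
  proof -
    have "(\<Sum>v\<in>{0..<n}. c v) = (\<Sum>v\<in>{0..<n}. 2 + d v)"
    proof (rule sum.cong)
      fix x assume "x \<in> {0..<n}"
      then have "2 \<le> c x" using c2 by auto
      then show "c x = 2 + d x" unfolding d_def by arith
    qed simp
    also have "\<dots> = 2 * n + (\<Sum>v\<in>{0..<n}. d v)" by (simp only: sum.distrib) simp
    finally show ?thesis .
  qed
  have A: "3 * W \<ge> 2 * n" using sumc cd by simp
  have B: "3 * W \<ge> 2 * n + 2" if "v < n" "f v = 1" for v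
  proof -
    have "\<exists>x<n. x \<noteq> v \<and> c x \<ge> 3"
    proof (cases "c (sc n v) \<ge> 3")
      case True then show ?thesis using sc_pc[OF n that(1)] by blast
    next
      case False
      let ?u = "sc n v"
      have u: "?u < n" "pc n ?u = v" using sc_pc[OF n that(1)] by auto
      have "c ?u = 2" using False c2[OF u(1)] by simp
      then have "f ?u + f (sc n ?u) = 1" using u that(2) unfolding c_def by simp
      then have "f ?u = 1 \<or> f (sc n ?u) = 1" by arith
      moreover have "f ?u \<noteq> 1" using c3[OF u(1)] \<open>c ?u = 2\<close> by auto
      ultimately have "f (sc n ?u) = 1" by simp
      then show ?thesis using c3 sc_pc[OF n u(1)] sc_pc[OF n that(1)] by blast
    qed
    then obtain x where x: "x < n" "x \<noteq> v" "c x \<ge> 3" by blast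
    have "d x + d v = (\<Sum>w\<in>{x,v}. d w)" using x by simp
    also have "\<dots> \<le> (\<Sum>w\<in>{0..<n}. d w)" by (rule sum_mono2) (use x that in auto)
    finally have "(\<Sum>w\<in>{0..<n}. d w) \<ge> 2" using x c3[OF that] unfolding d_def by simp
    then show ?thesis using sumc cd by simp
  qed
  have C: "even W" if "\<forall>v<n. f v \<noteq> 1"
    unfolding W_def by (rule dvd_sum) (use vals that in fastforce)
  have "even W \<or> 3 * W \<ge> 2 * n + 2" using B C by blast
  then show ?thesis using A unfolding W_def[symmetric] by presburger
qed

definition gg :: "nat \<Rightarrow> nat \<Rightarrow> nat" where
  "gg n i = (if i mod 3 = 1 \<or> (i = n - 1 \<and> n mod 3 = 1) then 2 else 0)"

lemma sum_h: "(\<Sum>i\<in>{0..<n}. (if i mod 3 = 1 then 2 else 0::nat)) = 2 * ((n + 1) div 3)"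
  by (induction n) (auto, presburger+)

lemma sum_gg: "(\<Sum>i\<in>{0..<n}. gg n i) = 2 * ((n + 2) div 3)"
proof (cases "n mod 3 = 1")
  case True
  then obtain p where p: "n = Suc p" by (cases n) auto
  have "(\<Sum>i\<in>{0..<n}. gg n i) = (\<Sum>i\<in>{0..<p}. gg n i) + gg n p" using p by simp
  also have "(\<Sum>i\<in>{0..<p}. gg n i) = (\<Sum>i\<in>{0..<p}. (if i mod 3 = 1 then 2 else 0::nat))"
    by (rule sum.cong) (use p in \<open>auto simp: gg_def\<close>)
  finally show ?thesis using sum_h[of p] True p by (simp add: gg_def) presburger
next
  case False
  have "(\<Sum>i\<in>{0..<n}. gg n i) = (\<Sum>i\<in>{0..<n}. (if i mod 3 = 1 then 2 else 0::nat))"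
    by (rule sum.cong) (use False in \<open>auto simp: gg_def\<close>)
  then show ?thesis using sum_h[of n] False by simp presburger
qed

lemma gg_path:
  assumes "n \<ge> 3" shows "is_220_function {0..<n} path_adj (gg n)"
  unfolding is_220_function_def
proof (intro conjI ballI impI)
  fix v assume v: "v \<in> {0..<n}"
  show "gg n v \<in> {0,1,2}" by (simp add: gg_def)
  assume "gg n v \<in> {0,1}"
  then have g0: "\<not> (v mod 3 = 1 \<or> (v = n - 1 \<and> n mod 3 = 1))" by (simp add: gg_def split: if_splits)
  obtain u where u: "u \<in> open_nbhd {0..<n} path_adj v" "gg n u = 2"
  proof (cases "v mod 3 = 0")
    case True
    then have "v + 1 < n" using g0 v by auto presburger
    then show ?thesis using that[of "v+1"] True by (auto simp: open_nbhd_def path_adj_def gg_def)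
  next
    case False
    then have "v mod 3 = 2" "v \<ge> 2" using g0 by presburger+
    moreover have "(v - 1) mod 3 = 1" using \<open>v mod 3 = 2\<close> \<open>v \<ge> 2\<close> by (cases v) (auto simp: mod_Suc split: if_splits)
    then have "gg n (v - 1) = 2" by (simp add: gg_def)
    moreover have "v - 1 \<in> open_nbhd {0..<n} path_adj v" using v \<open>v \<ge> 2\<close> by (simp add: open_nbhd_def path_adj_def)
    ultimately show ?thesis using that by blast
  qed
  have "gg n u \<le> (\<Sum>u\<in>open_nbhd {0..<n} path_adj v. gg n u)"
    by (rule member_le_sum) (use u in \<open>auto simp: open_nbhd_def\<close>)
  then show "2 \<le> (\<Sum>u\<in>open_nbhd {0..<n} path_adj v. gg n u)" using u by simp
qed

lemma path_cycle:
  assumes "n \<ge> 3" "is_220_function {0..<n} path_adj f"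
  shows "is_220_function {0..<n} (cycle_adj n) f"
  unfolding is_220_function_def
proof (intro conjI ballI impI)
  fix v assume v: "v \<in> {0..<n}"
  show "f v \<in> {0,1,2}" using assms v unfolding is_220_function_def by auto
  assume "f v \<in> {0,1}"
  then have "2 \<le> (\<Sum>u\<in>open_nbhd {0..<n} path_adj v. f u)" using assms v unfolding is_220_function_def by auto
  also have "\<dots> \<le> (\<Sum>u\<in>open_nbhd {0..<n} (cycle_adj n) v. f u)"
  proof (rule sum_mono2)
    show "open_nbhd {0..<n} path_adj v \<subseteq> open_nbhd {0..<n} (cycle_adj n) v"
    proof
      fix u assume "u \<in> open_nbhd {0..<n} path_adj v"
      then have u: "u < n" "v + 1 = u \<or> u + 1 = v" by (auto simp: open_nbhd_def path_adj_def)
      then have "(v + 1) mod n = u \<or> (u + 1) mod n = v" using v by auto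
      then show "u \<in> open_nbhd {0..<n} (cycle_adj n) v" using u by (auto simp: open_nbhd_def cycle_adj_def)
    qed
  qed (auto simp: open_nbhd_def)
  finally show "2 \<le> (\<Sum>u\<in>open_nbhd {0..<n} (cycle_adj n) v. f u)" .
qed

lemma gamma_eq:
  assumes "n \<ge> 3" and E: "E = path_adj \<or> E = cycle_adj n"
  shows "gamma_220 {0..<n} E = 2 * ((n + 2) div 3)"
  unfolding gamma_220_def
proof (rule Min_eqI)
  have "{(\<Sum>v\<in>{0..<n}. f v) | f. is_220_function {0..<n} E f} \<subseteq> {..2*n}"
  proof
    fix x assume "x \<in> {(\<Sum>v\<in>{0..<n}. f v) | f. is_220_function {0..<n} E f}"
    then obtain f where f: "x = (\<Sum>v\<in>{0..<n}. f v)" "is_220_function {0..<n} E f" by blast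
    have "(\<Sum>v\<in>{0..<n}. f v) \<le> (\<Sum>v\<in>{0..<n}. 2)"
    proof (rule sum_mono)
      fix v assume "v \<in> {0..<n}"
      then have "f v \<in> {0,1,2}" using f(2) unfolding is_220_function_def by blast
      then show "f v \<le> 2" by auto
    qed
    then show "x \<in> {..2*n}" using f by simp
  qed
  then show "finite {(\<Sum>v\<in>{0..<n}. f v) | f. is_220_function {0..<n} E f}" by (rule finite_subset) simp
next
  fix y assume "y \<in> {(\<Sum>v\<in>{0..<n}. f v) | f. is_220_function {0..<n} E f}"
  then obtain f where f: "y = (\<Sum>v\<in>{0..<n}. f v)" "is_220_function {0..<n} E f" by blast
  have "is_220_function {0..<n} (cycle_adj n) f" using E f(2) path_cycle[OF assms(1)] by auto
  then show "2 * ((n + 2) div 3) \<le> y" using lower_cycle[OF assms(1)] f by simp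
next
  have "is_220_function {0..<n} E (gg n)" using E gg_path[OF assms(1)] path_cycle[OF assms(1)] by auto
  then show "2 * ((n + 2) div 3) \<in> {(\<Sum>v\<in>{0..<n}. f v) | f. is_220_function {0..<n} E f}"
    using sum_gg[of n] by (metis (mono_tags, lifting) mem_Collect_eq)
qed

theorem proposition35:
  fixes n :: nat
  assumes "n \<ge> 3"
  shows "int (gamma_220 {0..<n} path_adj) = 2 * \<lceil>real n / 3\<rceil>
       \<and> int (gamma_220 {0..<n} (cycle_adj n)) = 2 * \<lceil>real n / 3\<rceil>"
  using gamma_eq[OF assms] ceil_eq[of n] by simp

end
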